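(* Let $\bm{\mathcal{X}}\in\mathbb{R}^{n\times r\times k}$, $\bm{\mathcal{U}}_t\in\mathbb{R}^{n\times R\times k}$ and $\bm{\mathcal{U}}_{t+1}=[\bm{\mathcal{I}}+\mu(\mathcal{A}^*\mathcal{A})(\bm{\mathcal{X}}*\bm{\mathcal{X}}^\top-\bm{\mathcal{U}}_t*\bm{\mathcal{U}}_t^\top)]*\bm{\mathcal{U}}_t$. Assume $\|\bm{\mathcal{U}}_t\|\le 3\|\bm{\mathcal{X}}\|$, $\mu\le\frac{1}{27}\|\bm{\mathcal{X}}\|^{-2}$, and $\|(\mathcal{A}^*\mathcal{A}-\mathcal{I})(\bm{\mathcal{X}}*\bm{\mathcal{X}}^\top-\bm{\mathcal{U}}_t*\bm{\mathcal{U}}_t^\top)\|\le\|\bm{\mathcal{X}}\|^2$. Then $\|\bm{\mathcal{U}}_{t+1}\|\le 3\|\bm{\mathcal{X}}\|$.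
   Context: All tensors are real third-order with third mode of length $k$. The t-product $*$ is tube-wise circular convolution: $(\bm{\mathcal{A}}*\bm{\mathcal{B}})(i,i',:)=\sum_p\bm{\mathcal{A}}(i,p,:)\circledast\bm{\mathcal{B}}(p,i',:)$; equivalently, with Fourier slices $\overline{\bm{\mathcal{T}}}^{(j)}(i,i')=\sum_{j'}\bm{\mathcal{T}}(i,i',j')e^{-\sqrt{-1}\,2\pi(j-1)(j'-1)/k}$ and $\overline{\bm{\mathcal{T}}}=\mathrm{blockdiag}(\overline{\bm{\mathcal{T}}}^{(j)})_j$, $\overline{\bm{\mathcal{A}}*\bm{\mathcal{B}}}=\overline{\bm{\mathcal{A}}}\,\overline{\bm{\mathcal{B}}}$. The transpose transposes each frontal slice and reverses slices $2,\dots,k$. $\bm{\mathcal{I}}$ is the identity tensor, $\mathcal{I}$ the identity operator. $\|\bm{\mathcal{T}}\|=\|\overline{\bm{\mathcal{T}}}\|$. $\mathcal{A}^*\mathcal{A}(\bm{\mathcal{Z}})=\sum_i\langle\bm{\mathcal{A}}_i,\bm{\mathcal{Z}}\rangle\bm{\mathcal{A}}_i$ for fixed tubal-symmetric $\bm{\mathcal{A}}_i\in\mathbb{R}^{n\times n\times k}$, with $\langle\cdot,\cdot\rangle$ the entrywise inner product. *)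

theory Defs
  imports "HOL-Analysis.Analysis"
begin

text \<open>Real third-order tensors, indexed from 0: entry (i,i',j) with i < nr,
  i' < nc, j < k (tube length k). Values outside the index box are irrelevant.\<close>
type_synonym tensor = "nat \<Rightarrow> nat \<Rightarrow> nat \<Rightarrow> real"

definition tprod :: "nat \<Rightarrow> nat \<Rightarrow> tensor \<Rightarrow> tensor \<Rightarrow> tensor" where
  "tprod k m A B = (\<lambda>i i' j. \<Sum>p<m. \<Sum>l<k. A i p l * B p i' ((j + k - l) mod k))"

text \<open>Transpose: transpose each frontal slice and reverse slices 2..k.\<close>
definition ttrans :: "nat \<Rightarrow> tensor \<Rightarrow> tensor" where
  "ttrans k T = (\<lambda>i i' j. T i' i ((k - j) mod k))"

definition tid :: tensor where
  "tid = (\<lambda>i i' j. if i = i' \<and> j = 0 then 1 else 0)"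

definition fslice :: "nat \<Rightarrow> tensor \<Rightarrow> nat \<Rightarrow> nat \<Rightarrow> nat \<Rightarrow> complex" where
  "fslice k T j i i' = (\<Sum>j'<k. complex_of_real (T i i' j') * cis (- 2 * pi * real j * real j' / real k))"

text \<open>Block-diagonal matrix of Fourier slices, of size (m*k) x (p*k) for an m x p x k tensor.\<close>
definition bdiag :: "nat \<Rightarrow> nat \<Rightarrow> nat \<Rightarrow> tensor \<Rightarrow> nat \<Rightarrow> nat \<Rightarrow> complex" where
  "bdiag k m p T a b = (if a div m = b div p then fslice k T (a div m) (a mod m) (b mod p) else 0)"

definition copnorm :: "nat \<Rightarrow> nat \<Rightarrow> (nat \<Rightarrow> nat \<Rightarrow> complex) \<Rightarrow> real" where
  "copnorm nr nc M = Sup {sqrt (\<Sum>i<nr. (cmod (\<Sum>j<nc. M i j * x j))^2) | x.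
       (\<Sum>j<nc. (cmod (x j))^2) \<le> 1}"

text \<open>Tensor spectral norm of an m x p x k tensor: norm of the block-diagonal Fourier matrix.\<close>
definition tnorm :: "nat \<Rightarrow> nat \<Rightarrow> nat \<Rightarrow> tensor \<Rightarrow> real" where
  "tnorm k m p T = copnorm (m * k) (p * k) (bdiag k m p T)"

definition tinner :: "nat \<Rightarrow> nat \<Rightarrow> tensor \<Rightarrow> tensor \<Rightarrow> real" where
  "tinner n k A B = (\<Sum>i<n. \<Sum>i'<n. \<Sum>j<k. A i i' j * B i i' j)"

definition AstarA :: "nat \<Rightarrow> nat \<Rightarrow> nat \<Rightarrow> (nat \<Rightarrow> tensor) \<Rightarrow> tensor \<Rightarrow> tensor" where
  "AstarA n k N As Z = (\<lambda>i i' j. \<Sum>q<N. tinner n k (As q) Z * As q i i' j)"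

definition tubal_sym :: "nat \<Rightarrow> nat \<Rightarrow> tensor \<Rightarrow> bool" where
  "tubal_sym n k T \<longleftrightarrow> (\<forall>i<n. \<forall>i'<n. \<forall>j<k. ttrans k T i i' j = T i i' j)"

end

theory Submission
  imports Defs
begin


definition vnorm :: "nat \<Rightarrow> (nat \<Rightarrow> complex) \<Rightarrow> real" where
  "vnorm n x = sqrt (\<Sum>i<n. (cmod (x i))^2)"
definition mv :: "nat \<Rightarrow> (nat \<Rightarrow> nat \<Rightarrow> complex) \<Rightarrow> (nat \<Rightarrow> complex) \<Rightarrow> nat \<Rightarrow> complex" where
  "mv nc M x = (\<lambda>i. \<Sum>j<nc. M i j * x j)"
definition mva :: "nat \<Rightarrow> (nat \<Rightarrow> nat \<Rightarrow> complex) \<Rightarrow> (nat \<Rightarrow> complex) \<Rightarrow> nat \<Rightarrow> complex" where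
  "mva nr M y = (\<lambda>j. \<Sum>i<nr. cnj (M i j) * y i)"
definition cinner :: "nat \<Rightarrow> (nat \<Rightarrow> complex) \<Rightarrow> (nat \<Rightarrow> complex) \<Rightarrow> complex" where
  "cinner n x y = (\<Sum>i<n. x i * cnj (y i))"

lemma vnorm_L2: "vnorm n x = L2_set (\<lambda>i. cmod (x i)) {..<n}"
  by (simp add: vnorm_def L2_set_def)

lemma vnorm_nonneg: "0 \<le> vnorm n x"
  by (simp add: vnorm_L2)

lemma vnorm_sq: "(vnorm n x)^2 = (\<Sum>i<n. (cmod (x i))^2)"
  by (simp add: vnorm_def sum_nonneg)

lemma vnorm_sq_cinner: "(vnorm n x)^2 = Re (cinner n x x)"
proof -
  have "\<And>i. (cmod (x i))^2 = Re (x i * cnj (x i))"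
    by (simp add: cmod_power2 power2_eq_square[symmetric])
  then show ?thesis by (simp add: vnorm_sq cinner_def Re_sum)
qed

lemma vnorm_cong: "(\<And>i. i < n \<Longrightarrow> x i = y i) \<Longrightarrow> vnorm n x = vnorm n y"
  unfolding vnorm_def by (intro arg_cong[where f=sqrt] sum.cong) auto

lemma vnorm_add: "vnorm n (\<lambda>i. x i + y i) \<le> vnorm n x + vnorm n y"
proof -
  have "vnorm n (\<lambda>i. x i + y i) \<le> L2_set (\<lambda>i. cmod (x i) + cmod (y i)) {..<n}"
    unfolding vnorm_L2 by (rule L2_set_mono) (auto intro: norm_triangle_ineq)
  also have "\<dots> \<le> vnorm n x + vnorm n y"
    unfolding vnorm_L2 by (rule L2_set_triangle_ineq)
  finally show ?thesis .
qed

lemma vnorm_scale: "vnorm n (\<lambda>i. c * x i) = cmod c * vnorm n x"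
  unfolding vnorm_L2 by (simp add: L2_set_right_distrib norm_mult)

lemma vnorm_comp_le: "i < n \<Longrightarrow> cmod (x i) \<le> vnorm n x"
  unfolding vnorm_L2 by (rule member_le_L2_set) auto

lemma vnorm_zero_iff: "vnorm n x = 0 \<longleftrightarrow> (\<forall>i<n. x i = 0)"
  unfolding vnorm_L2 by (subst L2_set_eq_0_iff) auto

lemma mv_bound:
  assumes "vnorm nc x \<le> 1"
  shows "vnorm nr (mv nc M x) \<le> (\<Sum>i<nr. \<Sum>j<nc. cmod (M i j))"
proof -
  have "vnorm nr (mv nc M x) \<le> (\<Sum>i<nr. cmod (mv nc M x i))"
    unfolding vnorm_L2 by (rule L2_set_le_sum) auto
  also have "\<dots> \<le> (\<Sum>i<nr. \<Sum>j<nc. cmod (M i j))"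
  proof (rule sum_mono)
    fix i
    have "cmod (mv nc M x i) \<le> (\<Sum>j<nc. cmod (M i j * x j))"
      unfolding mv_def by (rule norm_sum)
    also have "\<dots> \<le> (\<Sum>j<nc. cmod (M i j))"
    proof (rule sum_mono)
      fix j assume "j \<in> {..<nc}"
      then have "cmod (x j) \<le> 1" using vnorm_comp_le[of j nc x] assms by auto
      then show "cmod (M i j * x j) \<le> cmod (M i j)"
        by (simp add: norm_mult mult_left_le)
    qed
    finally show "cmod (mv nc M x i) \<le> (\<Sum>j<nc. cmod (M i j))" .
  qed
  finally show ?thesis .
qed

lemma copnorm_alt: "copnorm nr nc M = Sup {vnorm nr (mv nc M x) | x. vnorm nc x \<le> 1}"
proof -
  have "\<And>x. (vnorm nc x \<le> 1) = ((\<Sum>j<nc. (cmod (x j))^2) \<le> 1)"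
    by (simp add: vnorm_def)
  then show ?thesis unfolding copnorm_def by (simp add: vnorm_def mv_def)
qed

lemma copnorm_ge:
  assumes "vnorm nc x \<le> 1"
  shows "vnorm nr (mv nc M x) \<le> copnorm nr nc M"
  unfolding copnorm_alt
proof (rule cSup_upper)
  show "vnorm nr (mv nc M x) \<in> {vnorm nr (mv nc M x) |x. vnorm nc x \<le> 1}" using assms by blast
  show "bdd_above {vnorm nr (mv nc M x) |x. vnorm nc x \<le> 1}"
    by (rule bdd_aboveI[where M="\<Sum>i<nr. \<Sum>j<nc. cmod (M i j)"]) (auto intro: mv_bound)
qed

lemma copnorm_nonneg: "0 \<le> copnorm nr nc M"
  using copnorm_ge[of nc "\<lambda>_. 0" nr M] vnorm_nonneg[of nr] 
  by (smt (verit) vnorm_zero_iff)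

lemma mv_scale: "mv nc M (\<lambda>j. c * x j) = (\<lambda>i. c * mv nc M x i)"
  unfolding mv_def by (auto simp: sum_distrib_left intro!: sum.cong)

lemma mv_cong: "(\<And>j. j < nc \<Longrightarrow> x j = y j) \<Longrightarrow> mv nc M x = mv nc M y"
  unfolding mv_def by (auto intro!: sum.cong)

lemma copnorm_mult: "vnorm nr (mv nc M x) \<le> copnorm nr nc M * vnorm nc x"
proof (cases "vnorm nc x = 0")
  case True
  then have "mv nc M x = mv nc M (\<lambda>_. 0)" using vnorm_zero_iff by (intro mv_cong) auto
  then have "mv nc M x = (\<lambda>_. 0)" by (simp add: mv_def)
  then show ?thesis using True by (simp add: vnorm_def)
next
  case False
  define t where "t = vnorm nc x"
  have tpos: "t > 0" using False vnorm_nonneg[of nc x] t_def by auto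
  have "vnorm nc (\<lambda>j. complex_of_real (1/t) * x j) = 1"
    using tpos unfolding vnorm_scale t_def[symmetric] norm_of_real by simp
  then have "vnorm nr (mv nc M (\<lambda>j. complex_of_real (1/t) * x j)) \<le> copnorm nr nc M"
    by (intro copnorm_ge) auto
  then have "(1/t) * vnorm nr (mv nc M x) \<le> copnorm nr nc M"
    using tpos unfolding mv_scale vnorm_scale norm_of_real by simp
  then show ?thesis using tpos t_def by (simp add: field_simps)
qed

lemma copnorm_least:
  assumes "\<And>x. vnorm nc x \<le> 1 \<Longrightarrow> vnorm nr (mv nc M x) \<le> c"
  shows "copnorm nr nc M \<le> c"
  unfolding copnorm_alt
proof (rule cSup_least)
  have "vnorm nc (\<lambda>_. 0) = 0" using vnorm_zero_iff[of nc "\<lambda>_. 0"] by simp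
  then show "{vnorm nr (mv nc M x) |x. vnorm nc x \<le> 1} \<noteq> {}"
    by (smt (verit, best) empty_iff mem_Collect_eq)
qed (use assms in auto)

lemma adjoint: "cinner nr (mv nc M x) y = cinner nc x (mva nr M y)"
  unfolding cinner_def mv_def mva_def
  by (simp add: sum_distrib_left sum_distrib_right mult_ac sum.swap[of _ "{..<nr}"])

lemma cauchy_schwarz: "cmod (cinner n x y) \<le> vnorm n x * vnorm n y"
proof -
  have "cmod (cinner n x y) \<le> (\<Sum>i<n. cmod (x i * cnj (y i)))"
    unfolding cinner_def by (rule norm_sum)
  also have "\<dots> = (\<Sum>i<n. \<bar>cmod (x i)\<bar> * \<bar>cmod (y i)\<bar>)" by (simp add: norm_mult)
  also have "\<dots> \<le> vnorm n x * vnorm n y" unfolding vnorm_L2 by (rule L2_set_mult_ineq)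
  finally show ?thesis .
qed

lemma mva_bound: "vnorm nc (mva nr M y) \<le> copnorm nr nc M * vnorm nr y"
proof -
  define u where "u = mva nr M y"
  have "(vnorm nc u)^2 = Re (cinner nc u u)" by (rule vnorm_sq_cinner)
  also have "\<dots> = Re (cinner nr (mv nc M u) y)" by (simp add: adjoint u_def)
  also have "\<dots> \<le> cmod (cinner nr (mv nc M u) y)" by (rule complex_Re_le_cmod)
  also have "\<dots> \<le> vnorm nr (mv nc M u) * vnorm nr y" by (rule cauchy_schwarz)
  also have "\<dots> \<le> copnorm nr nc M * vnorm nc u * vnorm nr y"
    by (intro mult_right_mono copnorm_mult vnorm_nonneg)
  finally have h: "(vnorm nc u)^2 \<le> copnorm nr nc M * vnorm nr y * vnorm nc u" by (simp add: mult_ac)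
  show ?thesis
  proof (cases "vnorm nc u = 0")
    case True then show ?thesis using copnorm_nonneg vnorm_nonneg u_def by (metis mult_nonneg_nonneg)
  next
    case False
    then have "vnorm nc u > 0" using vnorm_nonneg[of nc u] by auto
    with h show ?thesis unfolding u_def[symmetric] by (simp add: power2_eq_square)
  qed
qed



lemma cinner_cnj: "cnj (cinner n x y) = cinner n y x"
  unfolding cinner_def by (simp add: mult.commute)

lemma vnorm_lin_sq:
  fixes a b :: real and x y :: "nat \<Rightarrow> complex"
  shows "(vnorm n (\<lambda>i. complex_of_real a * x i - complex_of_real b * y i))^2
     = a^2 * (vnorm n x)^2 - 2 * a * b * Re (cinner n x y) + b^2 * (vnorm n y)^2"
proof -
  have h: "\<And>i. (cmod (complex_of_real a * x i - complex_of_real b * y i))^2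
      = a^2 * (cmod (x i))^2 - 2 * a * b * Re (x i * cnj (y i)) + b^2 * (cmod (y i))^2"
    unfolding cmod_power2 by (simp add: power2_eq_square algebra_simps)
  have "(vnorm n (\<lambda>i. complex_of_real a * x i - complex_of_real b * y i))^2
     = (\<Sum>i<n. a^2 * (cmod (x i))^2 - 2 * a * b * Re (x i * cnj (y i)) + b^2 * (cmod (y i))^2)"
    by (simp only: vnorm_sq h)
  also have "\<dots> = a^2 * (\<Sum>i<n. (cmod (x i))^2) - 2 * a * b * (\<Sum>i<n. Re (x i * cnj (y i)))
      + b^2 * (\<Sum>i<n. (cmod (y i))^2)"
    by (simp only: sum.distrib sum_subtractf sum_distrib_left)
  finally show ?thesis by (simp only: vnorm_sq cinner_def Re_sum)
qed

lemma mv_lin: "mv nc M (\<lambda>j. (a::complex) * x j - b * y j) = (\<lambda>i. a * mv nc M x i - b * mv nc M y i)"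
  unfolding mv_def by (auto simp: sum_distrib_left sum_subtractf algebra_simps intro!: sum.cong)

lemma spectral:
  fixes \<mu> :: real
  assumes mu: "0 \<le> \<mu>" "\<mu> * (copnorm nr nc M)^2 \<le> 1/3" and v: "vnorm nc v \<le> 1"
  shows "vnorm nr (\<lambda>i. mv nc M v i - \<mu> * mv nc M (mva nr M (mv nc M v)) i)
     \<le> copnorm nr nc M * (1 - \<mu> * (copnorm nr nc M)^2)"
proof -
  define s where "s = copnorm nr nc M"
  define a where "a = s^2"
  define w where "w = mv nc M v"
  define u where "u = mva nr M w"
  define z where "z = mv nc M u"
  define g0 where "g0 = (vnorm nc v)^2"
  define g1 where "g1 = (vnorm nr w)^2"
  define g2 where "g2 = (vnorm nc u)^2"
  define g3 where "g3 = (vnorm nr z)^2"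
  have s0: "0 \<le> s" unfolding s_def by (rule copnorm_nonneg)
  have a0: "0 \<le> a" unfolding a_def by simp
  have b: "\<mu> * a \<le> 1/3" using mu unfolding a_def s_def by simp
  have g00: "0 \<le> g0" "g0 \<le> 1" unfolding g0_def using v vnorm_nonneg[of nc v]
    by (auto simp: power_le_one)
  have r1: "Re (cinner nr w z) = g2"
  proof -
    have "cinner nr z w = cinner nc u u" unfolding z_def u_def by (rule adjoint)
    then have "cinner nr w z = cnj (cinner nc u u)" by (metis cinner_cnj)
    then show ?thesis by (simp add: g2_def vnorm_sq_cinner)
  qed
  have r2: "Re (cinner nc v u) = g1"
  proof -
    have "cinner nr w w = cinner nc v u" unfolding w_def u_def by (rule adjoint)
    then show ?thesis using vnorm_sq_cinner[of nr w] by (simp add: g1_def)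
  qed
  have N: "(vnorm nr (\<lambda>i. w i - \<mu> * z i))^2 = g1 - 2 * \<mu> * g2 + \<mu>^2 * g3"
    using vnorm_lin_sq[of nr 1 w \<mu> z] r1 by (simp add: g1_def g3_def)
  define y where "y = (\<lambda>j. a * v j - u j)"
  have Y: "(vnorm nc y)^2 = a^2 * g0 - 2 * a * g1 + g2"
    unfolding y_def using r2 vnorm_lin_sq[of nc a v 1 u] by (simp add: g0_def g2_def)
  have My: "mv nc M y = (\<lambda>i. a * w i - z i)"
    unfolding y_def using mv_lin[of nc M a v 1 u] by (simp add: w_def z_def)
  have MY: "(vnorm nr (mv nc M y))^2 = a^2 * g1 - 2 * a * g2 + g3"
    unfolding My using r1 vnorm_lin_sq[of nr a w 1 z] by (simp add: g1_def g3_def)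
  have i1: "(vnorm nr (mv nc M y))^2 \<le> a * (vnorm nc y)^2"
  proof -
    have "vnorm nr (mv nc M y) \<le> s * vnorm nc y" unfolding s_def by (rule copnorm_mult)
    then have "(vnorm nr (mv nc M y))^2 \<le> (s * vnorm nc y)^2"
      by (intro power_mono vnorm_nonneg)
    then show ?thesis by (simp add: a_def power_mult_distrib)
  qed
  have i2: "g1 \<le> a * g0"
  proof -
    have "vnorm nr w \<le> s * vnorm nc v" unfolding s_def w_def by (rule copnorm_mult)
    then have "(vnorm nr w)^2 \<le> (s * vnorm nc v)^2"
      by (intro power_mono vnorm_nonneg)
    then show ?thesis by (simp add: a_def g1_def g0_def power_mult_distrib)
  qed
  define c1 where "c1 = (1 - \<mu> * a) * (1 - 3 * \<mu> * a)"
  define c2 where "c2 = \<mu> * (2 - 3 * \<mu> * a)"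
  have c1: "0 \<le> c1" unfolding c1_def using b by (intro mult_nonneg_nonneg) auto
  have c2: "0 \<le> c2" unfolding c2_def using b mu by (intro mult_nonneg_nonneg) auto
  have ident: "a * (1 - \<mu> * a)^2 * g0 - (g1 - 2 * \<mu> * g2 + \<mu>^2 * g3)
     = c1 * (a * g0 - g1) + c2 * (a^2 * g0 - 2 * a * g1 + g2)
       + \<mu>^2 * (a * (a^2 * g0 - 2 * a * g1 + g2) - (a^2 * g1 - 2 * a * g2 + g3))"
    unfolding c1_def c2_def by algebra
  have d1: "0 \<le> a * g0 - g1" using i2 by linarith
  have t1: "0 \<le> c1 * (a * g0 - g1)" by (rule mult_nonneg_nonneg[OF c1 d1])
  have t2: "0 \<le> c2 * (a^2 * g0 - 2 * a * g1 + g2)"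
    using mult_nonneg_nonneg[OF c2 zero_le_power2[of "vnorm nc y"]] unfolding Y .
  have d3: "0 \<le> a * (a^2 * g0 - 2 * a * g1 + g2) - (a^2 * g1 - 2 * a * g2 + g3)"
    using i1 unfolding Y MY by linarith
  have t3: "0 \<le> \<mu>^2 * (a * (a^2 * g0 - 2 * a * g1 + g2) - (a^2 * g1 - 2 * a * g2 + g3))"
    by (rule mult_nonneg_nonneg[OF zero_le_power2 d3])
  have "(vnorm nr (\<lambda>i. w i - \<mu> * z i))^2 \<le> a * (1 - \<mu> * a)^2 * g0"
    using ident t1 t2 t3 N by linarith
  also have "\<dots> \<le> a * (1 - \<mu> * a)^2"
    by (rule mult_left_le[OF g00(2)]) (use a0 in simp)
  also have "\<dots> = (s * (1 - \<mu> * a))^2" unfolding a_def by (simp only: power_mult_distrib)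
  finally have "vnorm nr (\<lambda>i. w i - \<mu> * z i) \<le> s * (1 - \<mu> * a)"
  proof (rule power2_le_imp_le)
    show "0 \<le> s * (1 - \<mu> * a)" using b s0 by (intro mult_nonneg_nonneg) auto
  qed
  then show ?thesis unfolding s_def a_def w_def z_def u_def .
qed



definition om :: "nat \<Rightarrow> nat \<Rightarrow> nat \<Rightarrow> complex" where
  "om k j m = cis (- 2 * pi * real j * real m / real k)"

lemma fslice_om: "fslice k T j i i' = (\<Sum>j'<k. complex_of_real (T i i' j') * om k j j')"
  unfolding fslice_def om_def ..

lemma om_add: "om k j (m1 + m2) = om k j m1 * om k j m2"
  unfolding om_def cis_mult by (rule arg_cong[where f=cis]) (simp add: algebra_simps diff_divide_distrib add_divide_distrib)

lemma om_0: "om k j 0 = 1" unfolding om_def by simp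

lemma om_kmult: "k > 0 \<Longrightarrow> om k j (k * q) = 1"
proof -
  assume k: "k > 0"
  have "- 2 * pi * real j * real (k * q) / real k = 2 * pi * (- real (j * q))"
    using k by (simp add: field_simps)
  moreover have "(- real (j * q)) \<in> \<int>" by simp
  ultimately show ?thesis unfolding om_def by (metis cis_multiple_2pi)
qed

lemma om_mod: "k > 0 \<Longrightarrow> om k j (m mod k) = om k j m"
proof -
  assume k: "k > 0"
  have "om k j m = om k j (m mod k + k * (m div k))" by simp
  also have "\<dots> = om k j (m mod k)" by (simp only: om_add om_kmult[OF k] mult_1_right)
  finally show ?thesis by simp
qed

lemma om_cnj_prod: "om k j m * cnj (om k j m) = 1"
  unfolding om_def cis_cnj cis_mult by simp

lemma om_kminus: "k > 0 \<Longrightarrow> m \<le> k \<Longrightarrow> om k j (k - m) = cnj (om k j m)"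
proof -
  assume k: "k > 0" and m: "m \<le> k"
  have "om k j (k - m) = om k j (k - m) * (om k j m * cnj (om k j m))" by (simp add: om_cnj_prod)
  also have "\<dots> = om k j (k - m + m) * cnj (om k j m)" by (simp add: om_add mult.assoc)
  also have "\<dots> = cnj (om k j m)" using m om_kmult[OF k, of j 1] by simp
  finally show ?thesis .
qed

lemma sum_shift_mod:
  fixes k l :: nat and g :: "nat \<Rightarrow> complex"
  assumes k: "k > 0" and l: "l < k"
  shows "(\<Sum>j'<k. g ((j' + k - l) mod k)) = (\<Sum>m<k. (g m :: complex))"
proof (rule sum.reindex_bij_witness[where i="\<lambda>m. (m + l) mod k" and j="\<lambda>j'. (j' + k - l) mod k"])
  fix a assume a: "a \<in> {..<k}"
  have "((a + k - l) mod k + l) mod k = (a + k - l + l) mod k" by (rule mod_add_left_eq)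
  also have "\<dots> = (a + k) mod k" using l by simp
  also have "\<dots> = a" using a by simp
  finally show "((a + k - l) mod k + l) mod k = a" .
next
  fix b assume b: "b \<in> {..<k}"
  have "((b + l) mod k + k - l) mod k = ((b + l) mod k + (k - l)) mod k" using l by simp
  also have "\<dots> = (b + l + (k - l)) mod k" by (rule mod_add_left_eq)
  also have "\<dots> = (b + k) mod k" using l by simp
  also have "\<dots> = b" using b by simp
  finally show "((b + l) mod k + k - l) mod k = b" .
qed (use k in auto)

lemma sum_rev_mod:
  fixes k :: nat and g :: "nat \<Rightarrow> complex"
  assumes k: "k > 0"
  shows "(\<Sum>j'<k. g ((k - j') mod k)) = (\<Sum>m<k. (g m :: complex))"
proof (rule sum.reindex_bij_witness[where i="\<lambda>m. (k - m) mod k" and j="\<lambda>j'. (k - j') mod k"])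
  fix a assume a: "a \<in> {..<k}"
  show "(k - (k - a) mod k) mod k = a"
  proof (cases "a = 0")
    case True then show ?thesis using k by simp
  next
    case False then show ?thesis using a by simp
  qed
  then show "(k - (k - a) mod k) mod k = a" .
qed (use k in auto)

lemma fslice_ttrans:
  assumes k: "k > 0"
  shows "fslice k (ttrans k X) j i i' = cnj (fslice k X j i' i)"
proof -
  have "fslice k (ttrans k X) j i i' = (\<Sum>j'<k. complex_of_real (X i' i ((k - j') mod k)) * om k j j')"
    unfolding fslice_om ttrans_def ..
  also have "\<dots> = (\<Sum>j'<k. (\<lambda>m. complex_of_real (X i' i m) * cnj (om k j m)) ((k - j') mod k))"
  proof (rule sum.cong)
    fix j' assume j': "j' \<in> {..<k}"
    have "cnj (om k j ((k - j') mod k)) = cnj (om k j (k - j'))" using k by (simp add: om_mod)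
    also have "\<dots> = om k j j'" using om_kminus[OF k, of j' j] j' by simp
    finally show "complex_of_real (X i' i ((k - j') mod k)) * om k j j'
        = (\<lambda>m. complex_of_real (X i' i m) * cnj (om k j m)) ((k - j') mod k)" by simp
  qed simp
  also have "\<dots> = (\<Sum>m<k. complex_of_real (X i' i m) * cnj (om k j m))"
    by (rule sum_rev_mod[OF k])
  also have "\<dots> = cnj (fslice k X j i' i)" unfolding fslice_om by simp
  finally show ?thesis .
qed

lemma fslice_tprod:
  assumes k: "k > 0"
  shows "fslice k (tprod k m A B) j i i' = (\<Sum>p<m. fslice k A j i p * fslice k B j p i')"
proof -
  have "fslice k (tprod k m A B) j i i'
     = (\<Sum>j'<k. \<Sum>p<m. \<Sum>l<k. complex_of_real (A i p l) * complex_of_real (B p i' ((j' + k - l) mod k)) * om k j j')"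
    unfolding fslice_om tprod_def by (simp only: of_real_sum of_real_mult sum_distrib_right)
  also have "\<dots> = (\<Sum>p<m. \<Sum>j'<k. \<Sum>l<k. complex_of_real (A i p l) * complex_of_real (B p i' ((j' + k - l) mod k)) * om k j j')"
    by (rule sum.swap)
  also have "\<dots> = (\<Sum>p<m. \<Sum>l<k. \<Sum>j'<k. complex_of_real (A i p l) * complex_of_real (B p i' ((j' + k - l) mod k)) * om k j j')"
    by (rule sum.cong[OF refl], rule sum.swap)
  also have "\<dots> = (\<Sum>p<m. \<Sum>l<k. complex_of_real (A i p l) * om k j l * fslice k B j p i')"
  proof (intro sum.cong refl)
    fix p l assume l: "l \<in> {..<k}"
    have "(\<Sum>j'<k. complex_of_real (A i p l) * complex_of_real (B p i' ((j' + k - l) mod k)) * om k j j')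
       = (\<Sum>j'<k. complex_of_real (A i p l) * om k j l * (\<lambda>q. complex_of_real (B p i' q) * om k j q) ((j' + k - l) mod k))"
    proof (rule sum.cong)
      fix j' assume "j' \<in> {..<k}"
      have "om k j l * om k j ((j' + k - l) mod k) = om k j ((l + (j' + k - l) mod k) mod k)"
        using k by (simp only: om_mod om_add)
      also have "(l + (j' + k - l) mod k) mod k = (l + (j' + k - l)) mod k" by (rule mod_add_right_eq)
      also have "\<dots> = (j' + k) mod k" using l by simp
      also have "om k j \<dots> = om k j j'" using k om_kmult[OF k, of j 1] by (simp add: om_mod om_add)
      finally have "om k j l * om k j ((j' + k - l) mod k) = om k j j'" .
      then show "complex_of_real (A i p l) * complex_of_real (B p i' ((j' + k - l) mod k)) * om k j j'
        = complex_of_real (A i p l) * om k j l * (\<lambda>q. complex_of_real (B p i' q) * om k j q) ((j' + k - l) mod k)"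
        by (metis (no_types, lifting) mult.assoc mult.commute)
    qed simp
    also have "\<dots> = complex_of_real (A i p l) * om k j l * (\<Sum>j'<k. (\<lambda>q. complex_of_real (B p i' q) * om k j q) ((j' + k - l) mod k))"
      by (simp only: sum_distrib_left)
    also have "\<dots> = complex_of_real (A i p l) * om k j l * fslice k B j p i'"
      using l unfolding fslice_om
      by (simp only: lessThan_iff sum_shift_mod[OF k, of l "\<lambda>q. complex_of_real (B p i' q) * om k j q"])
    finally show "(\<Sum>j'<k. complex_of_real (A i p l) * complex_of_real (B p i' ((j' + k - l) mod k)) * om k j j')
       = complex_of_real (A i p l) * om k j l * fslice k B j p i'" .
  qed
  also have "\<dots> = (\<Sum>p<m. fslice k A j i p * fslice k B j p i')"
    unfolding fslice_om[of k A] by (simp only: sum_distrib_right)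
  finally show ?thesis .
qed



lemma sum_block:
  fixes f :: "nat \<Rightarrow> complex"
  assumes J: "J < k" and z: "\<And>c. c < m * k \<Longrightarrow> c div m \<noteq> J \<Longrightarrow> f c = 0"
  shows "(\<Sum>c<m * k. f c) = (\<Sum>c'<m. f (J * m + c'))"
proof (cases "m = 0")
  case True then show ?thesis by simp
next
  case False
  then have m: "m > 0" by simp
  have sub: "{J * m..<J * m + m} \<subseteq> {..<m * k}"
  proof
    fix c assume "c \<in> {J * m..<J * m + m}"
    then have "c < J * m + m" by simp
    moreover have "J * m + m \<le> m * k" using J
      by (metis Suc_leI add.commute mult.commute mult_Suc mult_le_mono2)
    ultimately show "c \<in> {..<m * k}" by simp
  qed
  have "(\<Sum>c<m * k. f c) = (\<Sum>c\<in>{J * m..<J * m + m}. f c)"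
  proof (rule sum.mono_neutral_right)
    show "finite {..<m * k}" by simp
    show "{J * m..<J * m + m} \<subseteq> {..<m * k}" by (rule sub)
    show "\<forall>c\<in>{..<m * k} - {J * m..<J * m + m}. f c = 0"
    proof
      fix c assume c: "c \<in> {..<m * k} - {J * m..<J * m + m}"
      have "c div m \<noteq> J"
      proof
        assume d: "c div m = J"
        have e: "m * (c div m) + c mod m = c" by simp
        have "c mod m < m" using m by simp
        with e d have "J * m \<le> c \<and> c < J * m + m" by (simp add: mult.commute)
        with c show False by auto
      qed
      then show "f c = 0" using z c by auto
    qed
  qed
  also have "\<dots> = (\<Sum>c\<in>{0 + J * m..<m + J * m}. f c)" by (simp add: add.commute)
  also have "\<dots> = (\<Sum>c'\<in>{0..<m}. f (c' + J * m))" by (rule sum.shift_bounds_nat_ivl)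
  also have "\<dots> = (\<Sum>c'<m. f (J * m + c'))" by (simp add: atLeast0LessThan add.commute)
  finally show ?thesis .
qed

lemma bdiag_tprod_sum:
  assumes k: "k > 0" and a: "a < n * k"
  shows "(\<Sum>c<m * k. bdiag k n m A a c * bdiag k m R B c b) = bdiag k n R (tprod k m A B) a b"
proof -
  define J where "J = a div n"
  have J: "J < k" unfolding J_def using a by (simp add: less_mult_imp_div_less mult.commute)
  have "(\<Sum>c<m * k. bdiag k n m A a c * bdiag k m R B c b)
      = (\<Sum>c'<m. bdiag k n m A a (J * m + c') * bdiag k m R B (J * m + c') b)"
    by (rule sum_block[OF J]) (auto simp: bdiag_def J_def)
  also have "\<dots> = (\<Sum>c'<m. fslice k A J (a mod n) c' * (if J = b div R then fslice k B J c' (b mod R) else 0))"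
    by (intro sum.cong refl) (auto simp: bdiag_def J_def)
  also have "\<dots> = (if J = b div R then (\<Sum>c'<m. fslice k A J (a mod n) c' * fslice k B J c' (b mod R)) else 0)"
    by simp
  also have "\<dots> = bdiag k n R (tprod k m A B) a b"
    unfolding bdiag_def J_def using fslice_tprod[OF k] by simp
  finally show ?thesis .
qed

lemma mv_bdiag_tprod:
  assumes k: "k > 0" and a: "a < n * k"
  shows "mv (R * k) (bdiag k n R (tprod k m A B)) v a
       = mv (m * k) (bdiag k n m A) (mv (R * k) (bdiag k m R B) v) a"
proof -
  have "mv (m * k) (bdiag k n m A) (mv (R * k) (bdiag k m R B) v) a
      = (\<Sum>c<m * k. \<Sum>b<R * k. bdiag k n m A a c * bdiag k m R B c b * v b)"
    unfolding mv_def by (simp add: sum_distrib_left mult.assoc)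
  also have "\<dots> = (\<Sum>b<R * k. \<Sum>c<m * k. bdiag k n m A a c * bdiag k m R B c b * v b)"
    by (rule sum.swap)
  also have "\<dots> = (\<Sum>b<R * k. bdiag k n R (tprod k m A B) a b * v b)"
    by (intro sum.cong refl) (simp add: sum_distrib_right[symmetric] bdiag_tprod_sum[OF k a])
  finally show ?thesis unfolding mv_def by simp
qed

lemma bdiag_ttrans:
  assumes k: "k > 0"
  shows "bdiag k r n (ttrans k X) a b = cnj (bdiag k n r X b a)"
  unfolding bdiag_def using fslice_ttrans[OF k] by auto

lemma mv_bdiag_ttrans:
  assumes k: "k > 0"
  shows "mv nk (bdiag k r n (ttrans k X)) w = mva nk (bdiag k n r X) w"
  unfolding mv_def mva_def bdiag_ttrans[OF k] ..

lemma fslice_lin: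
  "fslice k (\<lambda>i i' j. T1 i i' j + c * T2 i i' j) J i i'
     = fslice k T1 J i i' + complex_of_real c * fslice k T2 J i i'"
  unfolding fslice_def by (simp add: sum.distrib sum_distrib_left algebra_simps)

lemma fslice_diff:
  "fslice k (\<lambda>i i' j. T1 i i' j - T2 i i' j) J i i' = fslice k T1 J i i' - fslice k T2 J i i'"
  unfolding fslice_def by (simp add: sum_subtractf algebra_simps)

lemma bdiag_lin:
  "bdiag k n p (\<lambda>i i' j. T1 i i' j + c * T2 i i' j) a b
     = bdiag k n p T1 a b + complex_of_real c * bdiag k n p T2 a b"
  unfolding bdiag_def by (simp add: fslice_lin)

lemma bdiag_diff:
  "bdiag k n p (\<lambda>i i' j. T1 i i' j - T2 i i' j) a b = bdiag k n p T1 a b - bdiag k n p T2 a b"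
  unfolding bdiag_def by (simp add: fslice_diff)

lemma fslice_tid:
  assumes k: "k > 0"
  shows "fslice k tid J i i' = (if i = i' then 1 else 0)"
proof -
  have "fslice k tid J i i' = (\<Sum>j'<k. if j' = 0 then (if i = i' then 1 else 0) else 0)"
    unfolding fslice_om tid_def by (intro sum.cong refl) (auto simp: om_0)
  also have "\<dots> = (if i = i' then 1 else 0)" using k by (simp add: sum.delta)
  finally show ?thesis .
qed

lemma mv_bdiag_tid:
  assumes k: "k > 0" and a: "a < n * k"
  shows "mv (n * k) (bdiag k n n tid) w a = w a"
proof -
  have n: "n > 0" using a by (cases n) auto
  have "mv (n * k) (bdiag k n n tid) w a = (\<Sum>c<n * k. if c = a then w c else 0)"
    unfolding mv_def
  proof (intro sum.cong refl)
    fix c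
    have "(a div n = c div n \<and> a mod n = c mod n) = (c = a)"
      by (metis div_mult_mod_eq)
    then show "bdiag k n n tid a c * w c = (if c = a then w c else 0)"
      unfolding bdiag_def fslice_tid[OF k] by auto
  qed
  also have "\<dots> = w a" using a by (simp add: sum.delta)
  finally show ?thesis .
qed



lemma final_arith:
  fixes s x \<mu> :: real
  assumes s0: "0 \<le> s" and sx: "s \<le> 3 * x" and mu: "0 \<le> \<mu>" and mx: "\<mu> * x^2 \<le> 1/27"
  shows "s * (1 - \<mu> * s^2) + \<mu> * (x^2 * s) + \<mu> * (x^2 * s) \<le> 3 * x"
proof (cases "2 * x^2 \<le> s^2")
  case True
  have "s * (1 - \<mu> * s^2) + \<mu> * (x^2 * s) + \<mu> * (x^2 * s) = s - \<mu> * s * (s^2 - 2 * x^2)"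
    by (simp add: algebra_simps power2_eq_square)
  also have "\<dots> \<le> s" using True mu s0 by simp
  finally show ?thesis using sx by linarith
next
  case False
  have x0: "0 \<le> x" using s0 sx by linarith
  have x2: "0 \<le> x^2" by simp
  have "s^2 < 2 * x^2" using False by simp
  moreover have "(3/2 * x)^2 = 9/4 * x^2" by (simp add: power2_eq_square)
  ultimately have "s^2 < (3/2 * x)^2" using x2 by linarith
  then have s15: "s < 3/2 * x" by (rule power_less_imp_less_base) (use x0 in simp)
  have "\<mu> * (x^2 * s) \<le> s / 27" using mult_right_mono[OF mx s0] by (simp add: mult.assoc)
  moreover have "0 \<le> \<mu> * s * s^2" using mu s0 by simp
  ultimately have "s * (1 - \<mu> * s^2) + \<mu> * (x^2 * s) + \<mu> * (x^2 * s) \<le> s + 2 * (s / 27)"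
    by (simp add: algebra_simps)
  also have "\<dots> \<le> 3 * x" using s15 s0 by linarith
  finally show ?thesis .
qed

lemma fslice_add:
  "fslice k (\<lambda>i i' j. T1 i i' j + T2 i i' j) J i i' = fslice k T1 J i i' + fslice k T2 J i i'"
  unfolding fslice_def by (simp add: sum.distrib algebra_simps)

lemma bdiag_add:
  "bdiag k n p (\<lambda>i i' j. T1 i i' j + T2 i i' j) a b = bdiag k n p T1 a b + bdiag k n p T2 a b"
  unfolding bdiag_def by (simp add: fslice_add)

theorem lemma16:
  fixes n r R k N :: nat and X U :: tensor and As :: "nat \<Rightarrow> tensor" and \<mu> :: real
  assumes "k > 0"
    and "\<forall>q<N. tubal_sym n k (As q)"
    and "0 \<le> \<mu>"
    and "tnorm k n R U \<le> 3 * tnorm k n r X"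
    and "\<mu> \<le> 1 / (27 * (tnorm k n r X)^2)"
    and "tnorm k n n (\<lambda>i i' j.
           AstarA n k N As (\<lambda>a b c. tprod k r X (ttrans k X) a b c - tprod k R U (ttrans k U) a b c) i i' j
           - (tprod k r X (ttrans k X) i i' j - tprod k R U (ttrans k U) i i' j))
         \<le> (tnorm k n r X)^2"
  shows "tnorm k n R
           (tprod k n
              (\<lambda>i i' j. tid i i' j + \<mu> * AstarA n k N As
                 (\<lambda>a b c. tprod k r X (ttrans k X) a b c - tprod k R U (ttrans k U) a b c) i i' j)
              U)
         \<le> 3 * tnorm k n r X"
proof -
  note k = assms(1)
  define XX where "XX = tprod k r X (ttrans k X)"
  define UU where "UU = tprod k R U (ttrans k U)"
  define AD where "AD = AstarA n k N As (\<lambda>a b c. XX a b c - UU a b c)"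
  define E where "E = (\<lambda>i i' j. AD i i' j - (XX i i' j - UU i i' j))"
  define H where "H = (\<lambda>i i' j. tid i i' j + \<mu> * AD i i' j)"
  define bX where "bX = bdiag k n r X"
  define bU where "bU = bdiag k n R U"
  define bE where "bE = bdiag k n n E"
  define sX where "sX = copnorm (n * k) (r * k) bX"
  define sU where "sU = copnorm (n * k) (R * k) bU"
  define sE where "sE = copnorm (n * k) (n * k) bE"
  have hsU: "sU \<le> 3 * sX" using assms(4) unfolding sU_def sX_def bU_def bX_def tnorm_def .
  have hmu: "\<mu> \<le> 1 / (27 * sX^2)" using assms(5) unfolding sX_def bX_def tnorm_def .
  have hsE: "sE \<le> sX^2" using assms(6) unfolding sE_def sX_def bE_def bX_def tnorm_def E_def AD_def XX_def UU_def .
  have sX0: "0 \<le> sX" unfolding sX_def by (rule copnorm_nonneg)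
  have sU0: "0 \<le> sU" unfolding sU_def by (rule copnorm_nonneg)
  have mx: "\<mu> * sX^2 \<le> 1/27"
  proof (cases "sX = 0")
    case True then show ?thesis by simp
  next
    case False
    then have "sX^2 > 0" by simp
    then show ?thesis using hmu by (simp add: field_simps)
  qed
  have mu3: "\<mu> * sU^2 \<le> 1/3"
  proof -
    have "sU^2 \<le> (3 * sX)^2" using hsU sU0 by (intro power_mono) auto
    then have "\<mu> * sU^2 \<le> \<mu> * (9 * sX^2)" using assms(3) by (intro mult_left_mono) (auto simp: power_mult_distrib)
    then show ?thesis using mx by linarith
  qed
  have bAD: "bdiag k n n AD a c = bE a c + bdiag k n n XX a c - bdiag k n n UU a c" for a c
  proof -
    have "AD = (\<lambda>i i' j. E i i' j + (XX i i' j - UU i i' j))" unfolding E_def by simp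
    then show ?thesis unfolding bE_def by (simp add: bdiag_add bdiag_diff)
  qed
  have goal: "tnorm k n R (tprod k n H U) \<le> 3 * sX"
    unfolding tnorm_def
  proof (rule copnorm_least)
    fix v assume v: "vnorm (R * k) v \<le> 1"
    define w where "w = mv (R * k) bU v"
    have wb: "vnorm (n * k) w \<le> sU"
      using copnorm_mult[of "n * k" "R * k" bU v] v sU0 unfolding w_def sU_def
      by (smt (verit, best) mult_left_le)
    define T1 where "T1 = (\<lambda>i. w i - \<mu> * mv (R * k) bU (mva (n * k) bU w) i)"
    define T2 where "T2 = (\<lambda>i. complex_of_real \<mu> * mv (n * k) bE w i)"
    define T3 where "T3 = (\<lambda>i. complex_of_real \<mu> * mv (r * k) bX (mva (n * k) bX w) i)"
    have eq: "mv (R * k) (bdiag k n R (tprod k n H U)) v a = T1 a + T2 a + T3 a" if a: "a < n * k" for a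
    proof -
      have "mv (R * k) (bdiag k n R (tprod k n H U)) v a = mv (n * k) (bdiag k n n H) w a"
        unfolding w_def bU_def by (rule mv_bdiag_tprod[OF k a])
      also have "\<dots> = mv (n * k) (bdiag k n n tid) w a + \<mu> * (mv (n * k) bE w a
          + mv (n * k) (bdiag k n n XX) w a - mv (n * k) (bdiag k n n UU) w a)"
        unfolding mv_def H_def bdiag_lin bAD
        by (simp add: algebra_simps sum.distrib sum_subtractf sum_distrib_left)
      also have "mv (n * k) (bdiag k n n tid) w a = w a" by (rule mv_bdiag_tid[OF k a])
      also have "mv (n * k) (bdiag k n n XX) w a = mv (r * k) bX (mva (n * k) bX w) a"
        unfolding XX_def bX_def mv_bdiag_tprod[OF k a] mv_bdiag_ttrans[OF k] ..
      also have "mv (n * k) (bdiag k n n UU) w a = mv (R * k) bU (mva (n * k) bU w) a"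
        unfolding UU_def bU_def mv_bdiag_tprod[OF k a] mv_bdiag_ttrans[OF k] ..
      finally show ?thesis unfolding T1_def T2_def T3_def by (simp add: algebra_simps)
    qed
    have "vnorm (n * k) (mv (R * k) (bdiag k n R (tprod k n H U)) v)
        = vnorm (n * k) (\<lambda>i. (T1 i + T2 i) + T3 i)"
      by (rule vnorm_cong) (simp add: eq)
    also have "\<dots> \<le> vnorm (n * k) (\<lambda>i. T1 i + T2 i) + vnorm (n * k) T3" by (rule vnorm_add)
    also have "\<dots> \<le> vnorm (n * k) T1 + vnorm (n * k) T2 + vnorm (n * k) T3"
      using vnorm_add[of "n * k" T1 T2] by simp
    finally have tri: "vnorm (n * k) (mv (R * k) (bdiag k n R (tprod k n H U)) v)
       \<le> vnorm (n * k) T1 + vnorm (n * k) T2 + vnorm (n * k) T3" .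
    have b1: "vnorm (n * k) T1 \<le> sU * (1 - \<mu> * sU^2)"
      unfolding T1_def w_def sU_def using spectral[OF assms(3) mu3[unfolded sU_def] v] .
    have b2: "vnorm (n * k) T2 \<le> \<mu> * (sX^2 * sU)"
    proof -
      have "vnorm (n * k) T2 = \<mu> * vnorm (n * k) (mv (n * k) bE w)"
        unfolding T2_def vnorm_scale using assms(3) by simp
      also have "\<dots> \<le> \<mu> * (sE * vnorm (n * k) w)"
        using copnorm_mult[of "n * k" "n * k" bE w] assms(3) unfolding sE_def by (intro mult_left_mono) auto
      also have "\<dots> \<le> \<mu> * (sX^2 * sU)"
        using assms(3) hsE wb vnorm_nonneg[of "n * k" w] sX0
        by (intro mult_left_mono mult_mono) auto
      finally show ?thesis .
    qed
    have b3: "vnorm (n * k) T3 \<le> \<mu> * (sX^2 * sU)"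
    proof -
      have "vnorm (n * k) T3 = \<mu> * vnorm (n * k) (mv (r * k) bX (mva (n * k) bX w))"
        unfolding T3_def vnorm_scale using assms(3) by simp
      also have "\<dots> \<le> \<mu> * (sX * vnorm (r * k) (mva (n * k) bX w))"
        using copnorm_mult[of "n * k" "r * k" bX] assms(3) unfolding sX_def by (intro mult_left_mono) auto
      also have "\<dots> \<le> \<mu> * (sX * (sX * vnorm (n * k) w))"
        using mva_bound[of "r * k" "n * k" bX w] assms(3) sX0 unfolding sX_def
        by (intro mult_left_mono) auto
      also have "\<dots> \<le> \<mu> * (sX^2 * sU)"
      proof (rule mult_left_mono[OF _ assms(3)])
        have "sX * (sX * vnorm (n * k) w) \<le> sX * (sX * sU)"
          using wb sX0 by (intro mult_left_mono) auto
        then show "sX * (sX * vnorm (n * k) w) \<le> sX^2 * sU" by (simp add: power2_eq_square mult.assoc)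
      qed
      finally show ?thesis .
    qed
    have "sU * (1 - \<mu> * sU^2) + \<mu> * (sX^2 * sU) + \<mu> * (sX^2 * sU) \<le> 3 * sX"
      by (rule final_arith[OF sU0 hsU assms(3) mx])
    then show "vnorm (n * k) (mv (R * k) (bdiag k n R (tprod k n H U)) v) \<le> 3 * sX"
      using tri b1 b2 b3 by linarith
  qed
  then show ?thesis unfolding H_def AD_def XX_def UU_def sX_def bX_def tnorm_def .
qed

end
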